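(* For every integer $m\ge2$, $$G_m(t,0)=(-1)^m\,t\,\Pi_{m-1}(t)\quad\text{and}\quad G_m\!\left(t,\tfrac12\right)=\frac{(-1)^m}{2^{m-1}}\widetilde{\Pi}_{m-1}(t).$$
   Context: $G_1(t,\beta)=-1$ and for $m\ge2$, $G_m(t,\beta)=[\beta(t-1)-(m-1)t]G_{m-1}(t,\beta)+t(t-1)\frac{\partial}{\partial t}G_{m-1}(t,\beta)$. The Euler–Frobenius polynomials satisfy $\Pi_0(t)=1$, $\Pi_{m+1}(t)=(1+mt)\Pi_m(t)+t(1-t)\Pi_m'(t)$, and the modified Euler–Frobenius polynomials satisfy $\widetilde\Pi_0(t)=1$, $\widetilde\Pi_{m+1}(t)=(1+(2m+1)t)\widetilde\Pi_m(t)+2t(1-t)\widetilde\Pi_m'(t)$. *)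

theory Defs
  imports "HOL-Computational_Algebra.Polynomial"
begin

text \<open>G m beta as a real polynomial in t.  G 0 is unused (set to 0);
  G 1 = -1; for m \<ge> 2 (m = n+2):
  G m = [beta(t-1) - (m-1) t] G (m-1) + t(t-1) d/dt G (m-1).\<close>
fun G :: "nat \<Rightarrow> real \<Rightarrow> real poly" where
  "G 0 \<beta> = 0"
| "G (Suc 0) \<beta> = -1"
| "G (Suc (Suc n)) \<beta> =
     [:-\<beta>, \<beta> - real (Suc n):] * G (Suc n) \<beta> + [:0, -1, 1:] * pderiv (G (Suc n) \<beta>)"

fun EF :: "nat \<Rightarrow> real poly" where
  "EF 0 = 1"
| "EF (Suc m) = [:1, real m:] * EF m + [:0, 1, -1:] * pderiv (EF m)"

fun EFmod :: "nat \<Rightarrow> real poly" where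
  "EFmod 0 = 1"
| "EFmod (Suc m) = [:1, 2 * real m + 1:] * EFmod m + [:0, 2, -2:] * pderiv (EFmod m)"

end

theory Submission
  imports Defs
begin

lemma m1: "(-1::real poly) = [:-1:]" by (simp add: one_pCons)
lemma pd1: "pderiv (-1::real poly) = 0" by (simp add: m1 pderiv_pCons)

lemma G0: "G (Suc (Suc k)) 0 = smult ((-1) ^ k) ([:0, 1:] * EF (Suc k))"
proof (induction k)
  case 0
  then show ?case by (simp add: pderiv_pCons pd1 m1)
next
  case (Suc k)
  define s :: real where "s = (-1)^k"
  define E where "E = EF (Suc k)"
  define D where "D = pderiv E"
  have e: "G (Suc (Suc (Suc k))) 0 = [:0, - real (Suc (Suc k)):] * G (Suc (Suc k)) 0
      + [:0, -1, 1:] * pderiv (G (Suc (Suc k)) 0)" by simp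
  have E2: "EF (Suc (Suc k)) = [:1, real (Suc k):] * E + [:0, 1, -1:] * D"
    unfolding E_def D_def by (rule EF.simps(2))
  have pd: "pderiv ([:0,1:]*E) = E + [:0,1:]*D"
    by (simp add: pderiv_mult pderiv_pCons D_def)
  have c1: "[:0, - real (Suc (Suc k)):] * [:0,1:] + [:0,-1,1:] = - ([:0,1:]*[:1, real (Suc k):])"
    by simp
  have c2: "[:0,-1,1:]*[:0,1:] = -([:0,1:]*[:0,1,-1::real:])" by simp
  have "G (Suc (Suc (Suc k))) 0 = smult s (([:0, - real (Suc (Suc k)):] * [:0,1:] + [:0,-1,1:]) * E
        + ([:0,-1,1:]*[:0,1:]) * D)"
    unfolding e Suc s_def[symmetric] E_def[symmetric]
    apply (simp only: pderiv_smult pd)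
    by (simp add: algebra_simps smult_add_right del: pCons_0_0 mult_pCons_left mult_pCons_right)
  also have "\<dots> = smult ((-1)^Suc k) ([:0,1:] * EF (Suc (Suc k)))"
    unfolding c1 c2 E2 s_def by (simp add: algebra_simps smult_add_right smult_diff_right del: pCons_0_0 mult_pCons_left mult_pCons_right)
  finally show ?case .
qed

lemma Gh: "G (Suc k) (1/2) = smult ((-1) ^ Suc k / 2 ^ k) (EFmod k)"
proof (induction k)
  case 0
  then show ?case by (simp add: m1)
next
  case (Suc k)
  define c :: real where "c = (-1) ^ Suc k / 2 ^ k"
  define F where "F = EFmod k"
  define D where "D = pderiv F"
  have e: "G (Suc (Suc k)) (1/2) = [:-1/2, 1/2 - real (Suc k):] * G (Suc k) (1/2)
      + [:0, -1, 1:] * pderiv (G (Suc k) (1/2))" by simp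
  have F2: "EFmod (Suc k) = [:1, 2 * real k + 1:] * F + [:0, 2, -2:] * D"
    unfolding F_def D_def by (rule EFmod.simps(2))
  have c1: "[:-1/2, 1/2 - real (Suc k):] = smult (-1/2) [:1, 2 * real k + 1:]" by (simp add: field_simps)
  have c2: "[:0, -1, 1:] = smult (-1/2) [:0, 2, -2::real:]" by simp
  have cc: "(-1) ^ Suc (Suc k) / 2 ^ Suc k = (-1/2) * c" by (simp add: c_def)
  have "G (Suc (Suc k)) (1/2) = smult c ([:-1/2, 1/2 - real (Suc k):] * F + [:0, -1, 1:] * D)"
    unfolding e Suc c_def[symmetric] F_def[symmetric]
    by (simp add: pderiv_smult D_def smult_add_right)
  also have "\<dots> = smult ((-1) ^ Suc (Suc k) / 2 ^ Suc k) (EFmod (Suc k))"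
    unfolding cc F2 c1 c2 by (simp only: mult_smult_left mult_smult_right smult_add_right smult_smult mult.commute)
  finally show ?case .
qed

theorem lemma5p1:
  fixes m :: nat
  assumes "m \<ge> 2"
  shows "G m 0 = smult ((-1) ^ m) ([:0, 1:] * EF (m - 1)) \<and>
         G m (1/2) = smult ((-1) ^ m / 2 ^ (m - 1)) (EFmod (m - 1))"
proof -
  obtain k where k: "m = Suc (Suc k)" using assms by (metis add_2_eq_Suc le_Suc_ex)
  show ?thesis unfolding k using G0[of k] Gh[of "Suc k"] by simp
qed

end
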